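(* For all sufficiently large $R$ the following holds. Let $V\subset\mathcal D_R$ be finite, $G_V$ the graph on $V$ in which distinct points are adjacent iff their hyperbolic distance is at most $R$, and let the demands $D_{i,j}$ be computed from $V$. If $D_{i_{\max},j}=0$ for all $j=0,\dots,n_{i_{\max}}-1$, then $G_V$ has a Hamilton cycle.
   Context: $\mathcal D_R$ is the hyperbolic disk (curvature $-1$) of radius $R$ around the origin, with polar coordinates $(r,\theta)$, $r\in[0,R)$, $\theta\in(0,2\pi]$. Tiling: $i_{\max}=\lceil 0.9R/(2\ln 2)\rceil$, $n_i=2^{4-i+\lfloor R/(2\ln 2)\rfloor}$ for integers $0\le i\le i_{\max}$; $(i,j)$ is admissible if $0\le i\le i_{\max}$, $0\le j<n_i$; $T_{i,j}=\{(r,\theta)\in\mathcal D_R:\ R-2(i+1)\ln 2\le r<R-2i\ln 2,\ 2\pi j/n_i<\theta\le 2\pi(j+1)/n_i\}$. For a point set $V$, $N(T_{i,j})=|V\cap T_{i,j}|$. Demands: $D_{0,j}=N(T_{0,j})$ if $N(T_{0,j})\in\{1,2\}$ and $D_{0,j}=0$ otherwise; for $0<i\le i_{\max}$, $D_{i,j}=\max\{D_{i-1,2j}+D_{i-1,2j+1}+3-N(T_{i,j}),0\}$. *)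

theory Defs
  imports Complex_Main
begin

text \<open>Points of the hyperbolic disk are represented by polar coordinates (r, theta).\<close>
type_synonym hpoint = "real \<times> real"

definition hdisk :: "real \<Rightarrow> hpoint set" where
  "hdisk R = {(r, \<theta>). 0 \<le> r \<and> r < R \<and> 0 < \<theta> \<and> \<theta> \<le> 2 * pi}"

text \<open>Hyperbolic distance (curvature -1) via the hyperbolic law of cosines.\<close>
definition hdist :: "hpoint \<Rightarrow> hpoint \<Rightarrow> real" where
  "hdist p q = arcosh (cosh (fst p) * cosh (fst q)
                       - sinh (fst p) * sinh (fst q) * cos (snd p - snd q))"

definition imax :: "real \<Rightarrow> nat" where
  "imax R = nat \<lceil>0.9 * R / (2 * ln 2)\<rceil>"

definition ncount :: "real \<Rightarrow> nat \<Rightarrow> nat" where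
  "ncount R i = 2 ^ nat (4 - int i + \<lfloor>R / (2 * ln 2)\<rfloor>)"

definition tile :: "real \<Rightarrow> nat \<Rightarrow> nat \<Rightarrow> hpoint set" where
  "tile R i j = {(r, \<theta>) \<in> hdisk R.
      R - 2 * (real i + 1) * ln 2 \<le> r \<and> r < R - 2 * real i * ln 2 \<and>
      2 * pi * real j / real (ncount R i) < \<theta> \<and>
      \<theta> \<le> 2 * pi * (real j + 1) / real (ncount R i)}"

definition Ncnt :: "real \<Rightarrow> hpoint set \<Rightarrow> nat \<Rightarrow> nat \<Rightarrow> nat" where
  "Ncnt R V i j = card (V \<inter> tile R i j)"

fun demand :: "real \<Rightarrow> hpoint set \<Rightarrow> nat \<Rightarrow> nat \<Rightarrow> int" where
  "demand R V 0 j = (if Ncnt R V 0 j \<in> {1, 2} then int (Ncnt R V 0 j) else 0)"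
| "demand R V (Suc i) j =
     max (demand R V i (2 * j) + demand R V i (2 * j + 1) + 3 - int (Ncnt R V (Suc i) j)) 0"

definition hadj :: "real \<Rightarrow> hpoint \<Rightarrow> hpoint \<Rightarrow> bool" where
  "hadj R p q \<longleftrightarrow> p \<noteq> q \<and> hdist p q \<le> R"

definition has_hamilton_cycle :: "('a \<Rightarrow> 'a \<Rightarrow> bool) \<Rightarrow> 'a set \<Rightarrow> bool" where
  "has_hamilton_cycle E V \<longleftrightarrow> (\<exists>xs. distinct xs \<and> set xs = V \<and> 3 \<le> length xs \<and>
      (\<forall>k < length xs. E (xs ! k) (xs ! ((k + 1) mod length xs))))"

end

theory Submission
  imports Defs
begin


lemma one_minus_cos_le: "1 - cos (x::real) \<le> x^2 / 2"
proof -
  have "cos x = 1 - 2 * sin (x/2) ^ 2" using cos_double_sin[of "x/2"] by simp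
  moreover have "sin (x/2) ^ 2 \<le> (x/2)^2"
    using abs_sin_x_le_abs_x[of "x/2"] abs_le_square_iff by blast
  ultimately show ?thesis by (simp add: power_divide)
qed

lemma sinh_le_half_exp: "sinh (a::real) \<le> exp a / 2"
  by (simp add: sinh_def)

lemma cosh_eq_exp: "cosh (a::real) = (exp a + exp (-a)) / 2"
  by (simp add: cosh_def)

lemma exp_2ln2_pow: "exp (2 * real i * ln 2) = 4 ^ i"
proof -
  have "exp (2 * real i * ln 2) = exp (real i * (2 * ln 2))" by (simp add: algebra_simps)
  also have "\<dots> = exp (2 * ln 2) ^ i" by (rule exp_of_nat_mult)
  also have "exp (2 * ln 2) = (4::real)"
    by (metis exp_ln_iff exp_of_nat_mult numeral_Bit0 of_nat_numeral power2_eq_square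
        zero_less_numeral exp_ln mult_2 power_mult_distrib ln_mult)
  finally show ?thesis .
qed

lemma ln2_le1: "ln (2::real) \<le> 1"
proof -
  have "2 \<le> exp (1::real)" using exp_ge_add_one_self[of 1] by simp
  hence "ln 2 \<le> ln (exp (1::real))" by (intro ln_mono) auto
  thus ?thesis by simp
qed

lemma geo_core:
  fixes a b phi R :: real and i k :: nat
  assumes R: "R \<ge> 400" and a0: "0 \<le> a" and aR: "a < R" and b0: "0 \<le> b"
    and alo: "R - 2*(real i+1)*ln 2 \<le> a" and blo: "R - 2*(real i+1)*ln 2 \<le> b" and bhi: "b < R - 2*real i*ln 2"
    and ph: "\<bar>phi\<bar> \<le> 2*pi / 2^(4+k-i)" and ik: "i \<le> k+4"
    and kR: "R/(2*ln 2) - 1 < real k" and iR: "real i \<le> 0.9*R/(2*ln 2) + 1"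
  shows "cosh a * cosh b - sinh a * sinh b * cos phi \<le> cosh R"
proof -
  define L where "L = ln (2::real)"
  have L0: "0 < L" unfolding L_def by simp
  define n :: real where "n = 2^(4+k-i)"
  have n0: "n > 0" unfolding n_def by simp
  have n2i: "n * 2^i = 16 * 2^k"
  proof -
    have "n * 2^i = (2::real)^(4+k-i+i)" unfolding n_def by (simp add: power_add)
    also have "4+k-i+i = 4+k" using ik by simp
    finally show ?thesis by (simp add: power_add)
  qed
  have X: "cosh a * cosh b - sinh a * sinh b * cos phi = cosh (a-b) + sinh a * sinh b * (1 - cos phi)"
    by (simp add: cosh_diff algebra_simps)
  have c1: "1 - cos phi \<le> phi^2/2" by (rule one_minus_cos_le)
  have c1': "0 \<le> 1 - cos phi" by simp
  have c2: "sinh a * sinh b \<le> exp a / 2 * (exp b / 2)"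
    by (intro mult_mono sinh_le_half_exp) (use a0 b0 in auto)
  have s0: "0 \<le> sinh a * sinh b" using a0 b0 by simp
  have ph2: "phi^2 \<le> (2*pi/n)^2"
    using ph unfolding n_def by (metis abs_le_square_iff abs_of_nonneg divide_nonneg_pos pi_ge_zero
        mult_nonneg_nonneg zero_le_numeral zero_less_numeral zero_less_power)
  have eb: "exp b \<le> exp R / 4^i"
  proof -
    have "exp b \<le> exp (R - 2*real i*L)" using bhi unfolding L_def by simp
    also have "\<dots> = exp R / 4^i" using exp_2ln2_pow[of i] by (simp add: exp_diff L_def)
    finally show ?thesis .
  qed
  have ea: "exp a \<le> exp R" using aR by simp
  have p4: "(4::real)^i = (2^i)^2" by (metis power_mult_distrib power2_eq_square numeral_times_numeral semiring_norm(12) num_double)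
  have k4: "exp R / 4 \<le> (2::real)^k * 2^k"
  proof -
    have "R - 2*L \<le> 2 * real k * L" using kR L0 unfolding L_def by (simp add: field_simps)
    hence "exp (R - 2*L) \<le> exp (2 * real k * L)" by simp
    also have "\<dots> = 4^k" using exp_2ln2_pow[of k] by (simp add: L_def)
    also have "(4::real)^k = 2^k * 2^k" by (simp add: power_mult_distrib[symmetric])
    finally show ?thesis using exp_2ln2_pow[of 1] by (simp add: exp_diff L_def)
  qed
  have T2: "sinh a * sinh b * (1 - cos phi) \<le> exp R * (pi^2/128)"
  proof -
    have "sinh a * sinh b * (1 - cos phi) \<le> (exp a / 2 * (exp b / 2)) * (phi^2/2)"
      by (intro mult_mono c2 c1 s0 c1') (use s0 in auto)
    also have "\<dots> \<le> (exp R / 2 * (exp R / 4^i / 2)) * ((2*pi/n)^2/2)"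
      by (intro mult_mono divide_right_mono ph2 ea eb) auto
    also have "\<dots> = exp R * exp R * pi^2 / (2 * (n * 2^i)^2)"
      using n0 p4 by (simp add: field_simps power2_eq_square)
    also have "\<dots> = exp R * exp R * pi^2 / (512 * (2^k * 2^k))"
      by (simp add: n2i power2_eq_square)
    also have "\<dots> \<le> exp R * exp R * pi^2 / (512 * (exp R / 4))"
      by (intro divide_left_mono mult_left_mono k4) auto
    also have "\<dots> = exp R * (pi^2/128)" by (simp add: field_simps)
    finally show ?thesis .
  qed
  have eab: "exp (a - b) \<le> 16 * exp (0.9 * R)"
  proof -
    have "a - b \<le> 2*(real i+1)*L" using aR blo unfolding L_def by linarith
    also have "\<dots> \<le> 0.9*R + 4*L" using iR L0 unfolding L_def by (simp add: field_simps)
    finally have "exp (a-b) \<le> exp (0.9*R + 4*L)" by simp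
    also have "\<dots> = exp (0.9*R) * 16" using exp_2ln2_pow[of 2] by (simp add: exp_add L_def)
    finally show ?thesis by simp
  qed
  have eba: "exp (b - a) \<le> 4"
  proof -
    have "b - a \<le> 2 * real 1 * L" using alo bhi unfolding L_def by (simp add: algebra_simps)
    hence "exp (b-a) \<le> exp (2 * real 1 * L)" by simp
    thus ?thesis using exp_2ln2_pow[of 1] unfolding L_def by (metis of_nat_1 power_one_right)
  qed
  have ch: "cosh (a-b) \<le> 8 * exp (0.9*R) + 2"
    using eab eba by (simp add: cosh_eq_exp)
  have e9: "41 * exp (0.9 * R) \<le> exp R"
  proof -
    have "41 \<le> exp (0.1 * R)" using exp_ge_add_one_self[of "0.1*R"] R by linarith
    hence "41 * exp (0.9*R) \<le> exp (0.1*R) * exp (0.9*R)" by simp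
    also have "\<dots> = exp R" by (simp flip: exp_add)
    finally show ?thesis .
  qed
  have eR: "400 \<le> exp R" using exp_ge_add_one_self[of R] R by linarith
  have "pi^2 \<le> (4::real)^2" by (intro power_mono) (use pi_less_4 in auto)
  hence pi2: "pi^2 \<le> 16" by simp
  have "cosh R \<ge> exp R / 2" by (simp add: cosh_eq_exp)
  moreover have "exp R * (pi^2/128) \<le> exp R * (1/8)" using pi2 by (intro mult_left_mono) auto
  ultimately show ?thesis using X ch T2 e9 eR by linarith
qed
lemma hdist_le_R:
  fixes a b al be R :: real
  assumes a0: "0 \<le> a" and b0: "0 \<le> b" and R0: "0 \<le> R"
    and X: "cosh a * cosh b - sinh a * sinh b * cos (al - be) \<le> cosh R"
  shows "hdist (a, al) (b, be) \<le> R"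
proof -
  define Y where "Y = cosh a * cosh b - sinh a * sinh b * cos (al - be)"
  have "Y = cosh (a-b) + sinh a * sinh b * (1 - cos (al - be))"
    unfolding Y_def by (simp add: cosh_diff algebra_simps)
  moreover have "0 \<le> sinh a * sinh b * (1 - cos (al - be))" using a0 b0 by simp
  ultimately have Y1: "1 \<le> Y" using cosh_real_ge_1[of "a-b"] by linarith
  have "\<not> arcosh (cosh R) < arcosh Y"
    using Y1 X cosh_real_ge_1[of R] unfolding Y_def by (subst arcosh_less_iff_real) auto
  hence "arcosh Y \<le> R" using arcosh_cosh_real[OF R0] by simp
  thus ?thesis unfolding hdist_def Y_def by simp
qed

lemma hdist_sym: "hdist p q = hdist q p"
proof -
  have "cos (snd p - snd q) = cos (snd q - snd p)" by (metis cos_minus minus_diff_eq)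
  thus ?thesis unfolding hdist_def by (simp add: mult.commute)
qed

lemma hadj_sym: "hadj R p q \<Longrightarrow> hadj R q p"
  unfolding hadj_def using hdist_sym by metis

lemma hadj_small:
  assumes "p \<in> hdisk R" "q \<in> hdisk R" "fst p + fst q \<le> R" "p \<noteq> q"
  shows "hadj R p q"
proof -
  obtain a al b be where p: "p = (a,al)" and q: "q = (b,be)" by (cases p, cases q) auto
  have a0: "0 \<le> a" and b0: "0 \<le> b" using assms(1,2) p q by (auto simp: hdisk_def)
  have "- (sinh a * sinh b * cos (al - be)) \<le> sinh a * sinh b"
  proof -
    have "0 \<le> sinh a * sinh b" using a0 b0 by simp
    moreover have "- cos (al - be) \<le> 1" by (simp add: cos_ge_minus_one)
    ultimately have "sinh a * sinh b * (- cos (al - be)) \<le> sinh a * sinh b * 1"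
      by (intro mult_left_mono) auto
    thus ?thesis by simp
  qed
  hence "cosh a * cosh b - sinh a * sinh b * cos (al - be) \<le> cosh (a + b)"
    by (simp add: cosh_add)
  also have "\<dots> \<le> cosh R" using assms(3) p q a0 b0 by (subst cosh_real_nonneg_le_iff) auto
  finally have "hdist (a,al) (b,be) \<le> R" using a0 b0 assms(3) p q by (intro hdist_le_R) auto
  thus ?thesis using assms(4) p q unfolding hadj_def by simp
qed

definition Sreg :: "real \<Rightarrow> nat \<Rightarrow> nat \<Rightarrow> hpoint set" where
  "Sreg R i j = {(r, \<theta>) \<in> hdisk R. R - 2 * (real i + 1) * ln 2 \<le> r \<and>
      2 * pi * real j / real (ncount R i) < \<theta> \<and>
      \<theta> \<le> 2 * pi * (real j + 1) / real (ncount R i)}"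

lemma params:
  assumes R: "R \<ge> 400"
  shows "\<exists>k::nat. R/(2*ln 2) - 1 < real k \<and> (\<forall>i \<le> k+4. ncount R i = 2^(4+k-i)) \<and>
     imax R + 3 \<le> k \<and> real (imax R) \<le> 0.9*R/(2*ln 2) + 1 \<and> 0.9*R/(2*ln 2) \<le> real (imax R)
     \<and> 1 \<le> imax R"
proof -
  define y where "y = R / (2 * ln 2)"
  have L0: "0 < ln (2::real)" by simp
  have y200: "y \<ge> 200" unfolding y_def using ln2_le1 R L0 by (simp add: field_simps)
  define m where "m = \<lfloor>y\<rfloor>"
  define k where "k = nat m"
  have m0: "m \<ge> 0" unfolding m_def using y200 by simp
  have km: "real k = real_of_int m" unfolding k_def using m0 by simp
  have k1: "y - 1 < real k" using km unfolding m_def by linarith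
  have k2: "real k \<le> y" using km unfolding m_def by linarith
  have c0: "0 \<le> \<lceil>0.9*y\<rceil>" using y200 by simp
  have "imax R = nat \<lceil>0.9*y\<rceil>" unfolding imax_def y_def by simp
  hence im: "real (imax R) = real_of_int \<lceil>0.9*y\<rceil>" using c0 by simp
  have i1: "real (imax R) < 0.9*y + 1" using im by linarith
  have i2: "0.9 * y \<le> real (imax R)" using im by linarith
  have "0.9 * y = 0.9*R/(2*ln 2)" unfolding y_def by simp
  moreover have "imax R + 3 \<le> k" using i1 k1 y200 by linarith
  moreover have "1 \<le> imax R" using i2 y200 by linarith
  moreover have "\<forall>i \<le> k+4. ncount R i = 2^(4+k-i)"
  proof (intro allI impI)
    fix i assume "i \<le> k+4"
    hence "nat (4 - int i + \<lfloor>R / (2 * ln 2)\<rfloor>) = 4+k-i"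
      using m0 unfolding k_def m_def y_def by linarith
    thus "ncount R i = 2^(4+k-i)" unfolding ncount_def by simp
  qed
  ultimately show ?thesis using k1 i1 i2 unfolding y_def by auto
qed

lemma adj_tile:
  assumes R: "R \<ge> 400" and i: "i \<le> imax R" and p: "p \<in> Sreg R i j" and q: "q \<in> tile R i j"
    and pq: "p \<noteq> q"
  shows "hadj R p q"
proof -
  obtain k where k1: "R/(2*ln 2) - 1 < real k" and kn: "\<forall>i \<le> k+4. ncount R i = 2^(4+k-i)"
    and k3: "imax R + 3 \<le> k" and k4: "real (imax R) \<le> 0.9*R/(2*ln 2) + 1"
    using params[OF R] by blast
  obtain a al b be where pp: "p = (a,al)" and qq: "q = (b,be)" by (cases p, cases q) auto
  have ik: "i \<le> k+4" using i k3 by simp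
  define n where "n = real (ncount R i)"
  have nn: "n = 2^(4+k-i)" using kn ik unfolding n_def by simp
  have n0: "n > 0" using nn by simp
  from p pp have pa: "0 \<le> a" "a < R" "R - 2*(real i+1)*ln 2 \<le> a"
     "2*pi*real j / n < al" "al \<le> 2*pi*(real j+1)/n"
    unfolding Sreg_def hdisk_def n_def by auto
  from q qq have qb: "0 \<le> b" "R - 2*(real i+1)*ln 2 \<le> b" "b < R - 2*real i*ln 2"
     "2*pi*real j / n < be" "be \<le> 2*pi*(real j+1)/n"
    unfolding tile_def hdisk_def n_def by auto
  have w: "2*pi*(real j+1)/n - 2*pi*real j / n = 2*pi/n" using n0 by (simp add: field_simps)
  have ph: "\<bar>al - be\<bar> \<le> 2*pi / 2^(4+k-i)" using pa(4,5) qb(4,5) w nn by (simp add: abs_le_iff)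
  have iR: "real i \<le> 0.9*R/(2*ln 2) + 1" using i k4 by (meson of_nat_le_iff order_trans)
  have "cosh a * cosh b - sinh a * sinh b * cos (al - be) \<le> cosh R"
    by (rule geo_core[OF R pa(1,2) qb(1) pa(3) qb(2,3) ph ik k1 iR])
  hence "hdist (a,al) (b,be) \<le> R" using pa qb R by (intro hdist_le_R) auto
  thus ?thesis using pq pp qq unfolding hadj_def by simp
qed



definition pcover :: "('a \<Rightarrow> 'a \<Rightarrow> bool) \<Rightarrow> 'a set \<Rightarrow> 'a list list \<Rightarrow> bool" where
  "pcover E S ps \<longleftrightarrow> distinct (concat ps) \<and> set (concat ps) = S \<and>
     (\<forall>p\<in>set ps. p \<noteq> [] \<and> successively E p)"

lemma pcover_empty: "pcover E {} []" by (simp add: pcover_def)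

lemma pcover_append:
  assumes "pcover E A ps" "pcover E B qs" "A \<inter> B = {}"
  shows "pcover E (A \<union> B) (ps @ qs)"
  using assms unfolding pcover_def by auto

lemma join:
  assumes "finite T" "pcover E A ps" "A \<inter> T = {}" "\<forall>x\<in>A\<union>T. \<forall>y\<in>T. x \<noteq> y \<longrightarrow> E x y \<and> E y x"
  shows "\<exists>qs. pcover E (A \<union> T) qs \<and> length qs \<le> max 1 (length ps - card T)"
  using assms
proof (induction T rule: finite_induct)
  case empty
  then show ?case by auto
next
  case (insert t F)
  have "\<exists>qs. pcover E (A\<union>F) qs \<and> length qs \<le> max 1 (length ps - card F)"
    by (rule insert.IH) (use insert.prems in auto)
  then obtain qs where qs: "pcover E (A\<union>F) qs" and ql: "length qs \<le> max 1 (length ps - card F)"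
    by blast
  have tn: "t \<notin> A \<union> F" using insert by auto
  have cd: "card (insert t F) = Suc (card F)" using insert by simp
  have adj: "\<And>x. x \<in> A \<union> F \<Longrightarrow> E x t \<and> E t x" using insert.prems(3) tn by auto
  show ?case
  proof (cases qs)
    case Nil
    hence "A \<union> F = {}" using qs unfolding pcover_def by simp
    hence "pcover E (A \<union> insert t F) [[t]]" unfolding pcover_def by simp
    thus ?thesis by fastforce
  next
    case (Cons q1 rest)
    note qc = Cons
    show ?thesis
    proof (cases rest)
      case Nil
      have q1: "q1 \<noteq> []" "successively E q1" "distinct q1" "set q1 = A \<union> F"
        using qs qc Nil unfolding pcover_def by auto
      have "last q1 \<in> A \<union> F" using q1 by auto
      hence "successively E (q1 @ [t])" using q1 adj by (simp add: successively_append_iff)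
      hence "pcover E (A \<union> insert t F) [q1 @ [t]]" using q1 tn unfolding pcover_def by auto
      thus ?thesis by fastforce
    next
      case (Cons q2 rest')
      have q: "q1 \<noteq> []" "successively E q1" "q2 \<noteq> []" "successively E q2"
        using qs qc Cons unfolding pcover_def by auto
      have s: "set q1 \<subseteq> A \<union> F" "set q2 \<subseteq> A \<union> F"
        using qs qc Cons unfolding pcover_def by auto
      have "last q1 \<in> set q1" "hd q2 \<in> set q2" using q by (simp_all add: last_in_set hd_in_set)
      hence l: "last q1 \<in> A \<union> F" "hd q2 \<in> A \<union> F" using s by auto
      have "successively E (t # q2)" using q l adj by (cases q2) auto
      hence sc: "successively E (q1 @ t # q2)" using q l adj by (simp add: successively_append_iff)
      have "pcover E (A \<union> insert t F) ((q1 @ t # q2) # rest')"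
        using qs qc Cons tn sc q unfolding pcover_def by auto
      moreover have "length ((q1 @ t # q2) # rest') \<le> max 1 (length ps - card (insert t F))"
        using ql qc Cons cd by auto
      ultimately show ?thesis by blast
    qed
  qed
qed



lemma topjoin:
  assumes "finite T" "pcover E A ps" "A \<inter> T = {}" "\<forall>x\<in>A\<union>T. \<forall>y\<in>T. x \<noteq> y \<longrightarrow> E x y \<and> E y x"
    "length ps + 1 \<le> card T"
  shows "\<exists>q. pcover E (A \<union> T) [q] \<and> hd q \<in> T \<and> last q \<in> T"
proof -
  have "T \<noteq> {}" using assms(5) by (cases "T = {}") auto
  then obtain t0 where t0: "t0 \<in> T" by blast
  show ?thesis
  proof (cases "card T = 1")
    case True
    then obtain x where "T = {x}" using card_1_singletonE[of T] by auto
    hence T: "T = {t0}" using t0 by simp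
    hence "ps = []" using assms(5) by simp
    hence "A = {}" using assms(2) unfolding pcover_def by simp
    hence "pcover E (A \<union> T) [[t0]]" using T unfolding pcover_def by simp
    thus ?thesis using t0 by fastforce
  next
    case False
    hence "card (T - {t0}) \<ge> 1" using assms(5) t0 assms(1) by simp
    hence "T - {t0} \<noteq> {}" by (cases "T - {t0} = {}") auto
    then obtain t1 where t1: "t1 \<in> T" "t1 \<noteq> t0" by blast
    define T' where "T' = T - {t0, t1}"
    have cT': "card T' = card T - 2" unfolding T'_def using t0 t1 assms(1) by (simp add: card_Diff_subset)
    have f': "finite T'" unfolding T'_def using assms(1) by simp
    have d': "A \<inter> T' = {}" using assms(3) unfolding T'_def by blast
    have a': "\<forall>x\<in>A\<union>T'. \<forall>y\<in>T'. x \<noteq> y \<longrightarrow> E x y \<and> E y x" using assms(4) unfolding T'_def by blast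
    obtain qs where qs: "pcover E (A \<union> T') qs" and ql: "length qs \<le> max 1 (length ps - card T')"
      using join[OF f' assms(2) d' a'] by blast
    have ql1: "length qs \<le> 1" using ql cT' assms(5) by simp
    have disj: "t0 \<notin> A \<union> T'" "t1 \<notin> A \<union> T'" using t0 t1 assms(3) unfolding T'_def by auto
    have U: "A \<union> T = insert t0 (insert t1 (A \<union> T'))" using t0 t1 unfolding T'_def by auto
    have adj: "\<And>x y. x \<in> A \<union> T \<Longrightarrow> y \<in> T \<Longrightarrow> x \<noteq> y \<Longrightarrow> E x y \<and> E y x" using assms(4) by blast
    show ?thesis
    proof (cases qs)
      case Nil
      hence "A \<union> T' = {}" using qs unfolding pcover_def by simp
      have "E t0 t1" using adj[of t0 t1] t0 t1 by blast
      hence "pcover E (A \<union> T) [[t0,t1]]" using U t1 \<open>A \<union> T' = {}\<close> unfolding pcover_def by simp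
      thus ?thesis using t0 t1 by fastforce
    next
      case (Cons q rest)
      hence rest: "rest = []" using ql1 by simp
      have q: "q \<noteq> []" "successively E q" "distinct q" "set q = A \<union> T'"
        using qs Cons rest unfolding pcover_def by auto
      have "hd q \<in> set q" "last q \<in> set q" using q(1) by (simp_all add: hd_in_set last_in_set)
      hence hl: "hd q \<in> A \<union> T" "last q \<in> A \<union> T" using q(4) unfolding T'_def by auto
      have hl': "hd q \<in> A \<union> T'" "last q \<in> A \<union> T'" using q(4) \<open>hd q \<in> set q\<close> \<open>last q \<in> set q\<close> by auto
      have "hd q \<noteq> t0" "last q \<noteq> t1" using hl' disj by auto
      hence e: "E t0 (hd q)" "E (last q) t1" using adj[of "hd q" t0] adj[of "last q" t1] hl t0 t1 by auto
      have s1: "successively E (q @ [t1])" using q(1,2) e(2) by (simp add: successively_append_iff)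
      have "successively E (t0 # (q @ [t1]))" using s1 e(1) q(1) by (cases q) auto
      hence "pcover E (A \<union> T) [t0 # q @ [t1]]" using q disj U t1(2) unfolding pcover_def by auto
      thus ?thesis using t0 t1 by fastforce
    qed
  qed
qed



lemma concat_path:
  assumes "\<forall>p\<in>set Q. p \<noteq> [] \<and> successively E p \<and> hd p \<in> K \<and> last p \<in> K"
    "distinct (concat Q)" "\<forall>x\<in>K. \<forall>y\<in>K. x \<noteq> y \<longrightarrow> E x y"
  shows "successively E (concat Q) \<and> (Q \<noteq> [] \<longrightarrow> hd (concat Q) \<in> K \<and> last (concat Q) \<in> K)"
  using assms
proof (induction Q)
  case Nil
  then show ?case by simp
next
  case (Cons p Q)
  have h1: "\<forall>p\<in>set Q. p \<noteq> [] \<and> successively E p \<and> hd p \<in> K \<and> last p \<in> K"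
    using Cons.prems(1) by simp
  have h2: "distinct (concat Q)" using Cons.prems(2) by simp
  have IH: "successively E (concat Q) \<and> (Q \<noteq> [] \<longrightarrow> hd (concat Q) \<in> K \<and> last (concat Q) \<in> K)"
    using Cons.IH[OF h1 h2 Cons.prems(3)] .
  have p: "p \<noteq> []" "successively E p" "hd p \<in> K" "last p \<in> K" using Cons.prems by auto
  show ?case
  proof (cases "Q = []")
    case True
    then show ?thesis using p by simp
  next
    case False
    then obtain q Q' where QQ: "Q = q # Q'" by (cases Q) auto
    have qn: "q \<noteq> []" using h1 QQ by simp
    have cn: "concat Q \<noteq> []" "hd (concat Q) = hd q" using qn QQ by auto
    have hk: "hd (concat Q) \<in> K" "last (concat Q) \<in> K" using IH False by auto
    have "last p \<in> set p" using p(1) by (rule last_in_set)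
    moreover have "hd (concat Q) \<in> set (concat Q)" using cn(1) by (rule hd_in_set)
    ultimately have ne: "last p \<noteq> hd (concat Q)" using Cons.prems(2) by auto
    have "successively E (p @ concat Q)" using p IH cn hk ne Cons.prems(3)
      by (simp add: successively_append_iff)
    then show ?thesis using p cn hk by simp
  qed
qed

lemma ham:
  assumes "pcover E V Q" "\<forall>p\<in>set Q. hd p \<in> K \<and> last p \<in> K"
    "\<forall>x\<in>K. \<forall>y\<in>K. x \<noteq> y \<longrightarrow> E x y" "3 \<le> card V"
  shows "has_hamilton_cycle E V"
proof -
  define xs where "xs = concat Q"
  have d: "distinct xs" and sV: "set xs = V" using assms(1) unfolding pcover_def xs_def by auto
  have len: "length xs = card V" using distinct_card[OF d] sV by simp
  have h1: "\<forall>p\<in>set Q. p \<noteq> [] \<and> successively E p \<and> hd p \<in> K \<and> last p \<in> K"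
    using assms(1,2) unfolding pcover_def by blast
  have sp: "successively E xs \<and> (Q \<noteq> [] \<longrightarrow> hd xs \<in> K \<and> last xs \<in> K)"
  proof -
    have "distinct (concat Q)" using d unfolding xs_def .
    from concat_path[OF h1 this assms(3)] show ?thesis unfolding xs_def .
  qed
  have "xs \<noteq> []" using len assms(4) by (cases xs) auto
  hence Qn: "Q \<noteq> []" unfolding xs_def by auto
  have hd0: "hd xs = xs ! 0" using \<open>xs \<noteq> []\<close> by (simp add: hd_conv_nth)
  have lst: "last xs = xs ! (length xs - 1)" using \<open>xs \<noteq> []\<close> by (simp add: last_conv_nth)
  have "xs ! 0 \<noteq> xs ! (length xs - 1)" using d len assms(4) nth_eq_iff_index_eq[OF d, of 0 "length xs - 1"] by simp
  hence "hd xs \<noteq> last xs" using hd0 lst by simp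
  hence ne: "last xs \<noteq> hd xs" by (rule not_sym)
  have Kh: "hd xs \<in> K" "last xs \<in> K" using sp Qn by auto
  have ew: "E (last xs) (hd xs)" using assms(3) Kh ne by blast
  have "\<forall>k < length xs. E (xs ! k) (xs ! ((k + 1) mod length xs))"
  proof (intro allI impI)
    fix k assume k: "k < length xs"
    show "E (xs ! k) (xs ! ((k + 1) mod length xs))"
    proof (cases "Suc k < length xs")
      case True
      thus ?thesis using sp successively_nth[of E xs k] by simp
    next
      case False
      hence "Suc k = length xs" using k by auto
      hence "k = length xs - 1" "(k+1) mod length xs = 0" by auto
      thus ?thesis using ew hd0 lst by simp
    qed
  qed
  thus ?thesis unfolding has_hamilton_cycle_def using d sV len assms(4) by auto
qed

lemma pcover_UN:
  fixes n :: nat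
  assumes "\<forall>j<n. \<exists>ps. pcover E (S j) ps \<and> (\<forall>p\<in>set ps. hd p \<in> K \<and> last p \<in> K)"
    "\<forall>j<n. \<forall>j'<n. j \<noteq> j' \<longrightarrow> S j \<inter> S j' = {}"
  shows "\<exists>ps. pcover E (\<Union>j<n. S j) ps \<and> (\<forall>p\<in>set ps. hd p \<in> K \<and> last p \<in> K)"
  using assms
proof (induction n)
  case 0
  have "pcover E (\<Union>j<0. S j) []" by (simp add: pcover_def)
  then show ?case by (intro exI[of _ "[]"]) simp
next
  case (Suc n)
  have a1: "\<forall>j<n. \<exists>ps. pcover E (S j) ps \<and> (\<forall>p\<in>set ps. hd p \<in> K \<and> last p \<in> K)"
    using Suc.prems(1) less_SucI by blast
  have a2: "\<forall>j<n. \<forall>j'<n. j \<noteq> j' \<longrightarrow> S j \<inter> S j' = {}"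
    using Suc.prems(2) less_SucI by blast
  obtain ps where ps: "pcover E (\<Union>j<n. S j) ps" "\<forall>p\<in>set ps. hd p \<in> K \<and> last p \<in> K"
    using Suc.IH[OF a1 a2] by blast
  obtain qs where qs: "pcover E (S n) qs" "\<forall>p\<in>set qs. hd p \<in> K \<and> last p \<in> K"
    using Suc.prems(1) by blast
  have "\<forall>j<n. S j \<inter> S n = {}"
  proof (intro allI impI)
    fix j assume j: "j < n"
    show "S j \<inter> S n = {}" using Suc.prems(2)[rule_format, of j n] j by simp
  qed
  hence "(\<Union>j<n. S j) \<inter> S n = {}" by blast
  hence "pcover E ((\<Union>j<n. S j) \<union> S n) (ps @ qs)" using ps(1) qs(1) by (rule pcover_append[rotated 2])
  moreover have "(\<Union>j<Suc n. S j) = (\<Union>j<n. S j) \<union> S n" by (simp add: lessThan_Suc Un_commute)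
  moreover have "\<forall>p\<in>set (ps @ qs). hd p \<in> K \<and> last p \<in> K" using ps(2) qs(2) by auto
  ultimately show ?case by metis
qed




lemma sreg0: "Sreg R 0 j = tile R 0 j"
  unfolding Sreg_def tile_def hdisk_def by auto

lemma ncount_double:
  assumes R: "R \<ge> 400" and i: "Suc i \<le> imax R"
  shows "real (ncount R i) = 2 * real (ncount R (Suc i))" "0 < real (ncount R (Suc i))"
proof -
  obtain k where kn: "\<forall>i \<le> k+4. ncount R i = 2^(4+k-i)" and k3: "imax R + 3 \<le> k"
    using params[OF R] by blast
  have a: "ncount R i = 2^(4+k-i)" "ncount R (Suc i) = 2^(4+k-Suc i)" using kn i k3 by auto
  have "4+k-i = Suc (4+k-Suc i)" using i k3 by simp
  thus "real (ncount R i) = 2 * real (ncount R (Suc i))" using a by simp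
  show "0 < real (ncount R (Suc i))" using a by simp
qed

lemma decomp:
  assumes R: "R \<ge> 400" and i: "Suc i \<le> imax R"
  shows "Sreg R (Suc i) j = tile R (Suc i) j \<union> Sreg R i (2*j) \<union> Sreg R i (2*j+1)"
    and "tile R (Suc i) j \<inter> (Sreg R i (2*j) \<union> Sreg R i (2*j+1)) = {}"
    and "Sreg R i (2*j) \<inter> Sreg R i (2*j+1) = {}"
proof -
  define N where "N = real (ncount R (Suc i))"
  have nc: "real (ncount R i) = 2 * N" and N0: "0 < N" using ncount_double[OF R i] unfolding N_def by auto
  define lo where "lo = 2*pi*real j / N"
  define mid where "mid = pi*(2*real j+1)/N"
  define hi where "hi = 2*pi*(real j+1) / N"
  have e1: "2*pi*real (2*j)/real (ncount R i) = lo" unfolding lo_def nc using N0 by (simp add: field_simps)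
  have e2: "2*pi*(real (2*j)+1)/real (ncount R i) = mid" unfolding mid_def nc using N0 by (simp add: field_simps)
  have e3: "2*pi*real (2*j+1)/real (ncount R i) = mid" unfolding mid_def nc using N0 by (simp add: field_simps)
  have e4: "2*pi*(real (2*j+1)+1)/real (ncount R i) = hi" unfolding hi_def nc using N0 by (simp add: field_simps)
  have f1: "2*pi*real j / real (ncount R (Suc i)) = lo" unfolding lo_def N_def ..
  have f2: "2*pi*(real j+1) / real (ncount R (Suc i)) = hi" unfolding hi_def N_def ..
  define c1 where "c1 = R - 2*(real i+1)*ln 2"
  define c2 where "c2 = R - 2*(real (Suc i)+1)*ln 2"
  have c12: "c2 \<le> c1" unfolding c1_def c2_def by simp
  have r1: "R - 2*real (Suc i)*ln 2 = c1" unfolding c1_def by simp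
  have S1: "Sreg R (Suc i) j = {(r, t) \<in> hdisk R. c2 \<le> r \<and> lo < t \<and> t \<le> hi}"
    unfolding Sreg_def f1 f2 c2_def by simp
  have T1: "tile R (Suc i) j = {(r, t) \<in> hdisk R. c2 \<le> r \<and> r < c1 \<and> lo < t \<and> t \<le> hi}"
    unfolding tile_def f1 f2 c2_def r1 by simp
  have S2: "Sreg R i (2*j) = {(r, t) \<in> hdisk R. c1 \<le> r \<and> lo < t \<and> t \<le> mid}"
    unfolding Sreg_def e1 e2 c1_def by simp
  have S3: "Sreg R i (2*j+1) = {(r, t) \<in> hdisk R. c1 \<le> r \<and> mid < t \<and> t \<le> hi}"
    unfolding Sreg_def e3 e4 c1_def by simp
  have lm: "lo < mid" "mid < hi" unfolding lo_def mid_def hi_def using N0 pi_gt_zero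
    by (simp_all add: field_simps)
  show "Sreg R (Suc i) j = tile R (Suc i) j \<union> Sreg R i (2*j) \<union> Sreg R i (2*j+1)"
    unfolding S1 T1 S2 S3 using c12 lm by auto
  show "tile R (Suc i) j \<inter> (Sreg R i (2*j) \<union> Sreg R i (2*j+1)) = {}"
    unfolding T1 S2 S3 by auto
  show "Sreg R i (2*j) \<inter> Sreg R i (2*j+1) = {}"
    unfolding S2 S3 by auto
qed

lemma clique_successively:
  "distinct xs \<Longrightarrow> \<forall>x\<in>set xs. \<forall>y\<in>set xs. x \<noteq> y \<longrightarrow> E x y \<Longrightarrow> successively E xs"
proof (induction xs)
  case Nil then show ?case by simp
next
  case (Cons a xs)
  have "successively E xs" using Cons by simp
  thus ?case using Cons.prems by (cases xs) auto
qed

lemma rec: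
  assumes R: "R \<ge> 400" and fin: "finite V" and sub: "V \<subseteq> hdisk R"
  shows "i \<le> imax R \<Longrightarrow> \<exists>ps. pcover (hadj R) (V \<inter> Sreg R i j) ps \<and> int (length ps) \<le> demand R V i j + 1"
proof (induction i arbitrary: j)
  case 0
  show ?case
  proof (cases "V \<inter> Sreg R 0 j = {}")
    case True
    have "pcover (hadj R) (V \<inter> Sreg R 0 j) []" using True by (simp add: pcover_def)
    moreover have "0 \<le> demand R V 0 j" by simp
    ultimately show ?thesis by (intro exI[of _ "[]"]) simp
  next
    case False
    have "finite (V \<inter> Sreg R 0 j)" using fin by simp
    then obtain xs where xs: "distinct xs" "set xs = V \<inter> Sreg R 0 j" using finite_distinct_list by blast
    have "\<forall>x\<in>set xs. \<forall>y\<in>set xs. x \<noteq> y \<longrightarrow> hadj R x y"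
    proof (intro ballI impI)
      fix x y assume "x \<in> set xs" "y \<in> set xs" "x \<noteq> y"
      thus "hadj R x y" using adj_tile[OF R, of 0 x j y] xs(2) sreg0[of R j] by auto
    qed
    hence "successively (hadj R) xs" by (rule clique_successively[OF xs(1)])
    moreover have "xs \<noteq> []" using xs(2) False by auto
    ultimately have "pcover (hadj R) (V \<inter> Sreg R 0 j) [xs]" using xs by (simp add: pcover_def)
    moreover have "0 \<le> demand R V 0 j" by simp
    ultimately show ?thesis by (intro exI[of _ "[xs]"]) simp
  qed
next
  case (Suc i)
  have ii: "i \<le> imax R" using Suc.prems by simp
  obtain ps1 where p1: "pcover (hadj R) (V \<inter> Sreg R i (2*j)) ps1" "int (length ps1) \<le> demand R V i (2*j) + 1"
    using Suc.IH[OF ii] by blast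
  obtain ps2 where p2: "pcover (hadj R) (V \<inter> Sreg R i (2*j+1)) ps2" "int (length ps2) \<le> demand R V i (2*j+1) + 1"
    using Suc.IH[OF ii] by blast
  note dc = decomp[OF R Suc.prems, of j]
  define A where "A = V \<inter> Sreg R i (2*j) \<union> V \<inter> Sreg R i (2*j+1)"
  define T where "T = V \<inter> tile R (Suc i) j"
  have pA: "pcover (hadj R) A (ps1 @ ps2)" unfolding A_def
    by (rule pcover_append[OF p1(1) p2(1)]) (use dc(3) in blast)
  have fT: "finite T" unfolding T_def using fin by simp
  have dAT: "A \<inter> T = {}" unfolding A_def T_def using dc(2) by blast
  have U: "A \<union> T = V \<inter> Sreg R (Suc i) j" unfolding A_def T_def dc(1) by blast
  have adj: "\<forall>x\<in>A\<union>T. \<forall>y\<in>T. x \<noteq> y \<longrightarrow> hadj R x y \<and> hadj R y x"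
  proof (intro ballI impI)
    fix x y assume x: "x \<in> A \<union> T" and y: "y \<in> T" and xy: "x \<noteq> y"
    have "x \<in> Sreg R (Suc i) j" using x U by blast
    moreover have "y \<in> tile R (Suc i) j" using y unfolding T_def by blast
    ultimately have "hadj R x y" using adj_tile[OF R Suc.prems] xy by blast
    thus "hadj R x y \<and> hadj R y x" using hadj_sym by blast
  qed
  obtain qs where qs: "pcover (hadj R) (A \<union> T) qs" "length qs \<le> max 1 (length (ps1 @ ps2) - card T)"
    using join[OF fT pA dAT adj] by blast
  have N: "card T = Ncnt R V (Suc i) j" unfolding T_def Ncnt_def ..
  have dem: "demand R V (Suc i) j = max (demand R V i (2 * j) + demand R V i (2 * j + 1) + 3 - int (Ncnt R V (Suc i) j)) 0"
    by simp
  have "int (length qs) \<le> demand R V (Suc i) j + 1"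
  proof -
    have "int (length qs) \<le> max 1 (int (length ps1) + int (length ps2) - int (card T))"
      using qs(2) by (simp add: of_nat_diff split: if_splits)
    thus ?thesis using p1(2) p2(2) dem N by linarith
  qed
  thus ?case using qs(1) U by auto
qed

lemma top:
  assumes R: "R \<ge> 400" and fin: "finite V" and sub: "V \<subseteq> hdisk R"
    and d0: "demand R V (imax R) j = 0"
  shows "\<exists>q. pcover (hadj R) (V \<inter> Sreg R (imax R) j) [q] \<and> hd q \<in> tile R (imax R) j
     \<and> last q \<in> tile R (imax R) j \<and> 3 \<le> card (V \<inter> tile R (imax R) j)"
proof -
  have "1 \<le> imax R" using params[OF R] by blast
  then obtain i where iS: "imax R = Suc i" by (cases "imax R") auto
  have ii: "i \<le> imax R" and si: "Suc i \<le> imax R" using iS by auto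
  obtain ps1 where p1: "pcover (hadj R) (V \<inter> Sreg R i (2*j)) ps1" "int (length ps1) \<le> demand R V i (2*j) + 1"
    using rec[OF R fin sub ii] by blast
  obtain ps2 where p2: "pcover (hadj R) (V \<inter> Sreg R i (2*j+1)) ps2" "int (length ps2) \<le> demand R V i (2*j+1) + 1"
    using rec[OF R fin sub ii] by blast
  note dc = decomp[OF R si, of j]
  define A where "A = V \<inter> Sreg R i (2*j) \<union> V \<inter> Sreg R i (2*j+1)"
  define T where "T = V \<inter> tile R (Suc i) j"
  have pA: "pcover (hadj R) A (ps1 @ ps2)" unfolding A_def
    by (rule pcover_append[OF p1(1) p2(1)]) (use dc(3) in blast)
  have fT: "finite T" unfolding T_def using fin by simp
  have dAT: "A \<inter> T = {}" unfolding A_def T_def using dc(2) by blast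
  have U: "A \<union> T = V \<inter> Sreg R (Suc i) j" unfolding A_def T_def dc(1) by blast
  have adj: "\<forall>x\<in>A\<union>T. \<forall>y\<in>T. x \<noteq> y \<longrightarrow> hadj R x y \<and> hadj R y x"
  proof (intro ballI impI)
    fix x y assume x: "x \<in> A \<union> T" and y: "y \<in> T" and xy: "x \<noteq> y"
    have "x \<in> Sreg R (Suc i) j" using x U by blast
    moreover have "y \<in> tile R (Suc i) j" using y unfolding T_def by blast
    ultimately have "hadj R x y" using adj_tile[OF R si] xy by blast
    thus "hadj R x y \<and> hadj R y x" using hadj_sym by blast
  qed
  have N: "card T = Ncnt R V (Suc i) j" unfolding T_def Ncnt_def ..
  have dem: "demand R V (Suc i) j = max (demand R V i (2 * j) + demand R V i (2 * j + 1) + 3 - int (Ncnt R V (Suc i) j)) 0"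
    by simp
  have nn: "0 \<le> demand R V i (2*j)" "0 \<le> demand R V i (2*j+1)"
    by (cases i; simp)+
  have cT: "length (ps1 @ ps2) + 1 \<le> card T" and c3: "3 \<le> card T"
    using p1(2) p2(2) dem N d0 iS nn by simp_all
  obtain q where q: "pcover (hadj R) (A \<union> T) [q]" "hd q \<in> T" "last q \<in> T"
    using topjoin[OF fT pA dAT adj cT] by blast
  show ?thesis using q U c3 iS unfolding T_def by auto
qed

lemma top_cover:
  assumes R: "R \<ge> 400" and p: "p \<in> hdisk R" and r: "R - 2*(real (imax R)+1)*ln 2 \<le> fst p"
  shows "\<exists>j < ncount R (imax R). p \<in> Sreg R (imax R) j"
proof -
  obtain r t where pp: "p = (r,t)" by (cases p)
  define n where "n = ncount R (imax R)"
  have n0: "0 < real n" unfolding n_def ncount_def by simp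
  have t: "0 < t" "t \<le> 2*pi" using p pp by (auto simp: hdisk_def)
  define x where "x = t * real n / (2*pi)"
  have x0: "0 < x" unfolding x_def using t n0 by simp
  have xn: "x \<le> real n" unfolding x_def using t n0 by (simp add: field_simps)
  define c where "c = \<lceil>x\<rceil>"
  have c1: "1 \<le> c" unfolding c_def using x0 by simp
  have c2: "c - 1 < x" "x \<le> c" unfolding c_def by linarith+
  have cn: "c \<le> int n" unfolding c_def using xn by (simp add: ceiling_le_iff)
  define j where "j = nat (c - 1)"
  have jr: "real j = real_of_int c - 1" unfolding j_def using c1 by simp
  have jn: "j < n" unfolding j_def using cn c1 by linarith
  have "real j < x" "x \<le> real j + 1" using jr c2 by linarith+
  hence "2*pi*real j/real n < t" "t \<le> 2*pi*(real j+1)/real n"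
    unfolding x_def using n0 pi_gt_zero by (simp_all add: field_simps)
  hence "p \<in> Sreg R (imax R) j" using p pp r unfolding Sreg_def n_def by auto
  thus ?thesis using jn unfolding n_def by blast
qed

lemma top_disj:
  assumes "j \<noteq> j'"
  shows "Sreg R i j \<inter> Sreg R i j' = {}"
proof -
  define n where "n = real (ncount R i)"
  have n0: "0 < n" unfolding n_def ncount_def by simp
  { fix a b :: nat and t assume ab: "a < b" and t1: "t \<le> 2*pi*(real a+1)/n" and t2: "2*pi*real b/n < t"
    have "real a + 1 \<le> real b" using ab by simp
    hence "2*pi*(real a+1)/n \<le> 2*pi*real b/n" using n0 by (simp add: divide_right_mono)
    hence False using t1 t2 by linarith }
  note key = this
  show ?thesis
  proof (rule ccontr)
    assume "Sreg R i j \<inter> Sreg R i j' \<noteq> {}"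
    then obtain r t where "(r,t) \<in> Sreg R i j" "(r,t) \<in> Sreg R i j'" by auto
    hence h: "2*pi*real j/n < t" "t \<le> 2*pi*(real j+1)/n" "2*pi*real j'/n < t" "t \<le> 2*pi*(real j'+1)/n"
      unfolding Sreg_def n_def by auto
    show False
    proof (cases "j < j'")
      case True show False by (rule key[OF True h(2) h(3)])
    next
      case False hence "j' < j" using assms by simp
      thus False using key[OF _ h(4) h(1)] by blast
    qed
  qed
qed

lemma small_imax:
  assumes R: "R \<ge> 400"
  shows "R - 2*real (imax R)*ln 2 \<le> R/2"
proof -
  have "0.9*R/(2*ln 2) \<le> real (imax R)" using params[OF R] by blast
  hence "0.9*R \<le> real (imax R) * (2*ln 2)" by (simp add: divide_le_eq)
  thus ?thesis using R by linarith
qed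

theorem mainTheorem10:
  shows "\<exists>R0. \<forall>R \<ge> R0. \<forall>V. finite V \<and> V \<subseteq> hdisk R \<and>
           (\<forall>j < ncount R (imax R). demand R V (imax R) j = 0)
           \<longrightarrow> has_hamilton_cycle (hadj R) V"
proof (intro exI[of _ 400] allI impI)
  fix R :: real and V
  assume R: "400 \<le> R" and H: "finite V \<and> V \<subseteq> hdisk R \<and> (\<forall>j < ncount R (imax R). demand R V (imax R) j = 0)"
  have fin: "finite V" and sub: "V \<subseteq> hdisk R" and dz: "\<And>j. j < ncount R (imax R) \<Longrightarrow> demand R V (imax R) j = 0"
    using H by auto
  define n where "n = ncount R (imax R)"
  define S where "S j = V \<inter> Sreg R (imax R) j" for j
  define K where "K = {p \<in> hdisk R. fst p \<le> R/2}"
  define c0 where "c0 = R - 2*(real (imax R)+1)*ln 2"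
  define C where "C = {p \<in> V. fst p < c0}"
  have sm: "R - 2*real (imax R)*ln 2 \<le> R/2" by (rule small_imax[OF R])
  have "c0 \<le> R - 2*real (imax R)*ln 2" unfolding c0_def by (simp add: algebra_simps)
  hence c0K: "c0 \<le> R/2" using sm by linarith
  have tileK: "\<And>p j. p \<in> tile R (imax R) j \<Longrightarrow> p \<in> K"
  proof -
    fix p j assume "p \<in> tile R (imax R) j"
    then obtain r t where "p = (r,t)" "(r,t) \<in> hdisk R" "r < R - 2*real (imax R)*ln 2"
      unfolding tile_def by auto
    thus "p \<in> K" using sm unfolding K_def by auto
  qed
  have tops: "\<forall>j<n. \<exists>ps. pcover (hadj R) (S j) ps \<and> (\<forall>p\<in>set ps. hd p \<in> K \<and> last p \<in> K)"
  proof (intro allI impI)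
    fix j assume "j < n"
    then obtain q where q: "pcover (hadj R) (S j) [q]" "hd q \<in> tile R (imax R) j" "last q \<in> tile R (imax R) j"
      using top[OF R fin sub dz[of j]] unfolding n_def S_def by blast
    thus "\<exists>ps. pcover (hadj R) (S j) ps \<and> (\<forall>p\<in>set ps. hd p \<in> K \<and> last p \<in> K)"
      using tileK by (intro exI[of _ "[q]"]) auto
  qed
  have disj: "\<forall>j<n. \<forall>j'<n. j \<noteq> j' \<longrightarrow> S j \<inter> S j' = {}"
    unfolding S_def using top_disj by blast
  obtain ps where ps: "pcover (hadj R) (\<Union>j<n. S j) ps" "\<forall>p\<in>set ps. hd p \<in> K \<and> last p \<in> K"
    using pcover_UN[OF tops disj] by blast
  have "finite C" unfolding C_def using fin by simp
  then obtain cs where cs: "distinct cs" "set cs = C" using finite_distinct_list by blast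
  have cc: "concat (map (\<lambda>c. [c]) cs) = cs" by (induction cs) auto
  have pC: "pcover (hadj R) C (map (\<lambda>c. [c]) cs)" unfolding pcover_def cc using cs by auto
  have CK: "\<forall>p\<in>set (map (\<lambda>c. [c]) cs). hd p \<in> K \<and> last p \<in> K"
    using cs c0K sub unfolding C_def K_def by auto
  have dSC: "(\<Union>j<n. S j) \<inter> C = {}" unfolding S_def C_def Sreg_def c0_def by auto
  have all: "pcover (hadj R) ((\<Union>j<n. S j) \<union> C) (ps @ map (\<lambda>c. [c]) cs)"
    by (rule pcover_append[OF ps(1) pC dSC])
  have VU: "(\<Union>j<n. S j) \<union> C = V"
  proof
    show "(\<Union>j<n. S j) \<union> C \<subseteq> V" unfolding S_def C_def by auto
  next
    show "V \<subseteq> (\<Union>j<n. S j) \<union> C"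
    proof
      fix p assume pV: "p \<in> V"
      show "p \<in> (\<Union>j<n. S j) \<union> C"
      proof (cases "fst p < c0")
        case True thus ?thesis using pV unfolding C_def by auto
      next
        case False
        then obtain j where "j < n" "p \<in> Sreg R (imax R) j"
          using top_cover[OF R, of p] pV sub unfolding c0_def n_def by force
        thus ?thesis using pV unfolding S_def by auto
      qed
    qed
  qed
  have n0: "0 < n" unfolding n_def ncount_def by simp
  have "3 \<le> card (V \<inter> tile R (imax R) 0)"
    using top[OF R fin sub dz[of 0]] n0 unfolding n_def by blast
  moreover have "card (V \<inter> tile R (imax R) 0) \<le> card V" using fin by (intro card_mono) auto
  ultimately have c3: "3 \<le> card V" by linarith
  have Kc: "\<forall>x\<in>K. \<forall>y\<in>K. x \<noteq> y \<longrightarrow> hadj R x y"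
    unfolding K_def by (auto intro: hadj_small)
  have "\<forall>p\<in>set (ps @ map (\<lambda>c. [c]) cs). hd p \<in> K \<and> last p \<in> K" using ps(2) CK by auto
  thus "has_hamilton_cycle (hadj R) V" using ham[OF _ _ Kc c3] all VU by metis
qed


end
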